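(* Let $\nu>0$ and $\epsilon\in\{0,1\}$, and let $\mathcal T:(X,T,U)\mapsto(x,t,u)$ be $$x=\frac X\nu+\frac T{\nu^3}-\frac T{\sqrt\nu},\qquad t=\frac T{\sqrt\nu},\qquad u=\frac U{\sqrt\nu}+\frac13\nu^{-5/2}-\frac13 .$$ Then the equation $$-2\nu^2U_XU_{XX}+3\epsilon U_XU-\nu^2U_{XXX}U+\tfrac23U_{XXX}-\tfrac23\nu^{5/2}U_{XXX}+\epsilon U_T-\nu^2U_{XXT}=0\qquad(E_{\nu,\epsilon})$$ describes pseudo-spherical surfaces with associated one-forms $\mathcal T^*\omega^i$, $i=1,2,3$, where $\omega^i$ are the one-forms of the following setting: for real $\alpha\neq0$, $\beta$ with $\alpha^2+\beta^2-1=\epsilon((\beta-1)/\alpha)^2$ and $m=u_{xx}-\epsilon u$, $\omega^1=(m-\beta+\epsilon\alpha^{-2}(\beta-1))dx+(-\beta u_x/\alpha-\beta/\alpha^2-um-1+u\beta+u_x/\alpha+1/\alpha^2)dt$, $\omega^2=\alpha\,dx+(-\beta/\alpha-\alpha u+1/\alpha+u_x)dt$, $\omega^3=(m+1)dx+(\epsilon u\alpha^{-2}(\beta-1)-um+1/\alpha^2+u_x/\alpha-u-\beta/\alpha^2-\beta u_x/\alpha)dt$. Here the pullback is computed by substituting $dx=\nu^{-1}dX+(\nu^{-3}-\nu^{-1/2})dT$, $dt=\nu^{-1/2}dT$, $u=U/\sqrt\nu+\frac13\nu^{-5/2}-\frac13$, $u_x=\sqrt\nu\,U_X$, $u_{x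x}=\nu^{3/2}U_{XX}$.
   Context: An equation describes pseudo-spherical surfaces if there are one-forms $\omega^i=f_{i1}dX+f_{i2}dT\neq0$ ($i=1,2,3$), with coefficients smooth functions of the independent variables, $U$ and finitely many derivatives of $U$, whose pullbacks by any solution satisfy $d\omega^1=\omega^3\wedge\omega^2$, $d\omega^2=\omega^1\wedge\omega^3$, $d\omega^3=\omega^1\wedge\omega^2$. *)

theory Defs
  imports "HOL-Analysis.Analysis"
begin

coinductive smooth_on :: "'a::euclidean_space set \<Rightarrow> ('a \<Rightarrow> real) \<Rightarrow> bool" where
  "(\<forall>x\<in>S. f differentiable at x) \<Longrightarrow>
   (\<forall>i\<in>Basis. smooth_on S (\<lambda>x. frechet_derivative f (at x) i)) \<Longrightarrow>
   smooth_on S f"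

definition pX :: "(real \<times> real \<Rightarrow> real) \<Rightarrow> real \<times> real \<Rightarrow> real" where
  "pX g p = frechet_derivative g (at p) (1, 0)"

definition pT :: "(real \<times> real \<Rightarrow> real) \<Rightarrow> real \<times> real \<Rightarrow> real" where
  "pT g p = frechet_derivative g (at p) (0, 1)"

text \<open>Jet coordinates (X, T, U, U_X, U_XX).  A one-form
  omega = a dX + b dT is given by its two coefficient functions on jet space.\<close>

type_synonym jet = "real \<times> real \<times> real \<times> real \<times> real"

definition jet_of :: "(real \<times> real \<Rightarrow> real) \<Rightarrow> real \<times> real \<Rightarrow> jet" where
  "jet_of U p = (fst p, snd p, U p, pX U p, pX (pX U) p)"

text \<open>An equation is a differential operator E: E U p = 0 means U satisfies
  the equation at the point p.  Forms are indexed by i in {1,2,3}: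
  omega^i = a i dX + b i dT.\<close>

definition describes_pss_with ::
  "((real \<times> real \<Rightarrow> real) \<Rightarrow> real \<times> real \<Rightarrow> real)
   \<Rightarrow> (nat \<Rightarrow> jet \<Rightarrow> real) \<Rightarrow> (nat \<Rightarrow> jet \<Rightarrow> real) \<Rightarrow> bool" where
  "describes_pss_with E a b \<longleftrightarrow>
     (\<forall>i\<in>{1,2,3::nat}.
        smooth_on UNIV (a i) \<and> smooth_on UNIV (b i) \<and>
        (\<exists>z. a i z \<noteq> 0 \<or> b i z \<noteq> 0)) \<and>
     (\<forall>S U. open S \<longrightarrow> smooth_on S U \<longrightarrow> (\<forall>p\<in>S. E U p = 0) \<longrightarrow>
        (let A = (\<lambda>i p. a i (jet_of U p)); B = (\<lambda>i p. b i (jet_of U p)) in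
         \<forall>p\<in>S.
           pX (B 1) p - pT (A 1) p = A 3 p * B 2 p - B 3 p * A 2 p \<and>
           pX (B 2) p - pT (A 2) p = A 1 p * B 3 p - B 1 p * A 3 p \<and>
           pX (B 3) p - pT (A 3) p = A 1 p * B 2 p - B 1 p * A 2 p))"

definition E_eq :: "real \<Rightarrow> real \<Rightarrow> (real \<times> real \<Rightarrow> real) \<Rightarrow> real \<times> real \<Rightarrow> real" where
  "E_eq \<nu> \<epsilon> U p =
     - 2 * \<nu>^2 * pX U p * pX (pX U) p + 3 * \<epsilon> * pX U p * U p
     - \<nu>^2 * pX (pX (pX U)) p * U p + 2/3 * pX (pX (pX U)) p
     - 2/3 * \<nu> powr (5/2) * pX (pX (pX U)) p + \<epsilon> * pT U p
     - \<nu>^2 * pT (pX (pX U)) p"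

definition om_dx :: "real \<Rightarrow> real \<Rightarrow> real \<Rightarrow> nat \<Rightarrow> real \<Rightarrow> real \<Rightarrow> real \<Rightarrow> real" where
  "om_dx \<epsilon> \<alpha> \<beta> i u ux uxx =
     (let m = uxx - \<epsilon> * u in
      if i = 1 then m - \<beta> + \<epsilon> * \<alpha> powi (-2) * (\<beta> - 1)
      else if i = 2 then \<alpha>
      else m + 1)"

definition om_dt :: "real \<Rightarrow> real \<Rightarrow> real \<Rightarrow> nat \<Rightarrow> real \<Rightarrow> real \<Rightarrow> real \<Rightarrow> real" where
  "om_dt \<epsilon> \<alpha> \<beta> i u ux uxx =
     (let m = uxx - \<epsilon> * u in
      if i = 1 then - \<beta> * ux / \<alpha> - \<beta> / \<alpha>^2 - u * m - 1 + u * \<beta> + ux / \<alpha> + 1 / \<alpha>^2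
      else if i = 2 then - \<beta> / \<alpha> - \<alpha> * u + 1 / \<alpha> + ux
      else \<epsilon> * u * \<alpha> powi (-2) * (\<beta> - 1) - u * m + 1 / \<alpha>^2 + ux / \<alpha> - u
           - \<beta> / \<alpha>^2 - \<beta> * ux / \<alpha>)"

definition pb_u :: "real \<Rightarrow> real \<Rightarrow> real" where
  "pb_u \<nu> U = U / sqrt \<nu> + 1/3 * \<nu> powr (-5/2) - 1/3"

definition pb_dX :: "real \<Rightarrow> real \<Rightarrow> real \<Rightarrow> real \<Rightarrow> nat \<Rightarrow> jet \<Rightarrow> real" where
  "pb_dX \<nu> \<epsilon> \<alpha> \<beta> i z =
     (case z of (X, T, U, UX, UXX) \<Rightarrow>
        om_dx \<epsilon> \<alpha> \<beta> i (pb_u \<nu> U) (sqrt \<nu> * UX) (\<nu> powr (3/2) * UXX) * \<nu> powr (-1))"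

definition pb_dT :: "real \<Rightarrow> real \<Rightarrow> real \<Rightarrow> real \<Rightarrow> nat \<Rightarrow> jet \<Rightarrow> real" where
  "pb_dT \<nu> \<epsilon> \<alpha> \<beta> i z =
     (case z of (X, T, U, UX, UXX) \<Rightarrow>
        om_dx \<epsilon> \<alpha> \<beta> i (pb_u \<nu> U) (sqrt \<nu> * UX) (\<nu> powr (3/2) * UXX)
          * (\<nu> powr (-3) - \<nu> powr (-1/2))
        + om_dt \<epsilon> \<alpha> \<beta> i (pb_u \<nu> U) (sqrt \<nu> * UX) (\<nu> powr (3/2) * UXX)
          * \<nu> powr (-1/2))"

end

theory Submission
  imports Defs
begin

inductive jpoly :: "(jet \<Rightarrow> real) \<Rightarrow> bool" where
  pconst: "jpoly (\<lambda>z. c)"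
| plin: "bounded_linear l \<Longrightarrow> jpoly l"
| padd: "jpoly f \<Longrightarrow> jpoly g \<Longrightarrow> jpoly (\<lambda>z. f z + g z)"
| pmult: "jpoly f \<Longrightarrow> jpoly g \<Longrightarrow> jpoly (\<lambda>z. f z * g z)"

lemma poly_diff_closed:
  "jpoly f \<Longrightarrow> (\<forall>x. f differentiable at x) \<and> (\<forall>i. jpoly (\<lambda>x. frechet_derivative f (at x) i))"
proof (induction rule: jpoly.induct)
  case (pconst c)
  have "\<And>x. frechet_derivative (\<lambda>z::jet. c) (at x) = (\<lambda>h. 0)"
    by (metis frechet_derivative_at has_derivative_const)
  then show ?case by (intro conjI allI differentiable_const) (simp add: jpoly.pconst)
next
  case (plin l)
  have d: "\<And>x. (l has_derivative l) (at x)"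
    using bounded_linear.has_derivative[OF plin has_derivative_ident] by simp
  hence fd: "\<And>x. frechet_derivative l (at x) = l" by (metis frechet_derivative_at)
  have "\<forall>x. l differentiable at x" using d unfolding differentiable_def by blast
  moreover have "\<forall>i. jpoly (\<lambda>x. frechet_derivative l (at x) i)"
    unfolding fd by (intro allI jpoly.pconst)
  ultimately show ?case by (rule conjI)
next
  case (padd f g)
  have df: "\<And>x. f differentiable at x" and dg: "\<And>x. g differentiable at x" using padd.IH by blast+
  have "\<And>x. frechet_derivative (\<lambda>z. f z + g z) (at x) =
     (\<lambda>h. frechet_derivative f (at x) h + frechet_derivative g (at x) h)"
    by (intro ext frechet_derivative_at[symmetric, THEN fun_cong] has_derivative_add) (simp_all add: frechet_derivative_works[symmetric] df dg)
  note fd = this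
  have "\<forall>x. (\<lambda>z. f z + g z) differentiable at x" using df dg by (intro allI differentiable_add)
  moreover have "\<forall>i. jpoly (\<lambda>x. frechet_derivative (\<lambda>z. f z + g z) (at x) i)"
  proof
    fix i
    have f1: "jpoly (\<lambda>x. frechet_derivative f (at x) i)" using padd.IH by blast
    have g1: "jpoly (\<lambda>x. frechet_derivative g (at x) i)" using padd.IH by blast
    show "jpoly (\<lambda>x. frechet_derivative (\<lambda>z. f z + g z) (at x) i)"
      unfolding fd by (rule jpoly.padd[OF f1 g1])
  qed
  ultimately show ?case by (rule conjI)
next
  case (pmult f g)
  have df: "\<And>x. f differentiable at x" and dg: "\<And>x. g differentiable at x" using pmult.IH by blast+
  have "\<And>x. frechet_derivative (\<lambda>z. f z * g z) (at x) =
     (\<lambda>h. f x * frechet_derivative g (at x) h + frechet_derivative f (at x) h * g x)"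
    by (intro ext frechet_derivative_at[symmetric, THEN fun_cong] has_derivative_mult) (simp_all add: frechet_derivative_works[symmetric] df dg)
  note fd = this
  have "\<forall>x. (\<lambda>z. f z * g z) differentiable at x" using df dg by (intro allI differentiable_mult)
  moreover have "\<forall>i. jpoly (\<lambda>x. frechet_derivative (\<lambda>z. f z * g z) (at x) i)"
  proof
    fix i
    have f1: "jpoly (\<lambda>x. frechet_derivative f (at x) i)" using pmult.IH by blast
    have g1: "jpoly (\<lambda>x. frechet_derivative g (at x) i)" using pmult.IH by blast
    show "jpoly (\<lambda>x. frechet_derivative (\<lambda>z. f z * g z) (at x) i)"
      unfolding fd by (rule jpoly.padd[OF jpoly.pmult jpoly.pmult]) (fact pmult.hyps f1 g1)+
  qed
  ultimately show ?case by (rule conjI)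
qed

lemma poly_smooth: "jpoly f \<Longrightarrow> smooth_on UNIV f"
  apply (rule smooth_on.coinduct[where X="\<lambda>S f. S = UNIV \<and> jpoly f"])
   apply simp
  subgoal for S g
    apply (rule exI[of _ S], rule exI[of _ g])
    using poly_diff_closed[of g] by blast
  done

lemma pdiff: "jpoly f \<Longrightarrow> jpoly g \<Longrightarrow> jpoly (\<lambda>z. f z - g z)"
proof -
  assume "jpoly f" "jpoly g"
  then have "jpoly (\<lambda>z. f z + (\<lambda>z. -1) z * g z)" by (intro jpoly.padd jpoly.pmult jpoly.pconst)
  then show ?thesis by simp
qed

lemma puminus: "jpoly f \<Longrightarrow> jpoly (\<lambda>z. - f z)"
proof -
  assume "jpoly f"
  then have "jpoly (\<lambda>z. (\<lambda>z. -1) z * f z)" by (intro jpoly.pmult jpoly.pconst)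
  then show ?thesis by simp
qed

lemma pdivc: "jpoly f \<Longrightarrow> jpoly (\<lambda>z. f z / c)"
proof -
  assume "jpoly f"
  then have "jpoly (\<lambda>z. f z * (\<lambda>z. 1 / c) z)" by (intro jpoly.pmult jpoly.pconst)
  then show ?thesis by simp
qed

lemma pif: "jpoly f \<Longrightarrow> jpoly g \<Longrightarrow> jpoly (\<lambda>z. if b then f z else g z)"
  by (cases b) simp_all

lemma pU: "jpoly (\<lambda>z::jet. fst (snd (snd z)))"
  by (rule jpoly.plin) (intro bounded_linear_compose[OF bounded_linear_fst] bounded_linear_compose[OF bounded_linear_snd] bounded_linear_snd)

lemma pUX: "jpoly (\<lambda>z::jet. fst (snd (snd (snd z))))"
  by (rule jpoly.plin) (intro bounded_linear_compose[OF bounded_linear_fst] bounded_linear_compose[OF bounded_linear_snd] bounded_linear_snd)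

lemma pUXX: "jpoly (\<lambda>z::jet. snd (snd (snd (snd z))))"
  by (rule jpoly.plin) (intro bounded_linear_compose[OF bounded_linear_snd] bounded_linear_snd)

lemmas prules = jpoly.padd jpoly.pmult pdiff puminus pdivc pif pU pUX pUXX jpoly.pconst

lemma poly_pbX: "jpoly (pb_dX \<nu> \<epsilon> \<alpha> \<beta> i)"
  unfolding pb_dX_def om_dx_def om_dt_def pb_u_def Let_def case_prod_unfold
  by (intro prules)

lemma poly_pbT: "jpoly (pb_dT \<nu> \<epsilon> \<alpha> \<beta> i)"
  unfolding pb_dT_def om_dx_def om_dt_def pb_u_def Let_def case_prod_unfold
  by (intro prules)

lemma sm_diff: "smooth_on S f \<Longrightarrow> x \<in> S \<Longrightarrow> f differentiable at x"
  by (erule smooth_on.cases) auto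

lemma sm_deriv: "smooth_on S f \<Longrightarrow> i \<in> Basis \<Longrightarrow> smooth_on S (\<lambda>x. frechet_derivative f (at x) i)"
  by (erule smooth_on.cases) auto

lemma sm_pX: "smooth_on S (f :: real \<times> real \<Rightarrow> real) \<Longrightarrow> smooth_on S (pX f)"
proof -
  assume a: "smooth_on S f"
  have "(1::real, 0::real) \<in> Basis" by (simp add: Basis_prod_def)
  from sm_deriv[OF a this] show ?thesis by (simp add: pX_def[abs_def])
qed

lemma fd_add: "f differentiable at p \<Longrightarrow> g differentiable at p \<Longrightarrow>
  frechet_derivative (\<lambda>x. f x + g x) (at p) v = frechet_derivative f (at p) v + frechet_derivative g (at p) v"
proof -
  assume a: "f differentiable at p" "g differentiable at p"
  have "((\<lambda>x. f x + g x) has_derivative (\<lambda>h. frechet_derivative f (at p) h + frechet_derivative g (at p) h)) (at p)"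
    by (rule has_derivative_add) (use a frechet_derivative_works in blast)+
  from fun_cong[OF frechet_derivative_at[OF this], of v] show ?thesis by simp
qed

lemma fd_diff: "f differentiable at p \<Longrightarrow> g differentiable at p \<Longrightarrow>
  frechet_derivative (\<lambda>x. f x - g x) (at p) v = frechet_derivative f (at p) v - frechet_derivative g (at p) v"
proof -
  assume a: "f differentiable at p" "g differentiable at p"
  have "((\<lambda>x. f x - g x) has_derivative (\<lambda>h. frechet_derivative f (at p) h - frechet_derivative g (at p) h)) (at p)"
    by (rule has_derivative_diff) (use a frechet_derivative_works in blast)+
  from fun_cong[OF frechet_derivative_at[OF this], of v] show ?thesis by simp
qed

lemma fd_mult: "f differentiable at p \<Longrightarrow> g differentiable at p \<Longrightarrow>
  frechet_derivative (\<lambda>x. f x * g x :: real) (at p) v = f p * frechet_derivative g (at p) v + frechet_derivative f (at p) v * g p"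
proof -
  assume a: "f differentiable at p" "g differentiable at p"
  have "((\<lambda>x. f x * g x) has_derivative (\<lambda>h. f p * frechet_derivative g (at p) h + frechet_derivative f (at p) h * g p)) (at p)"
    by (rule has_derivative_mult) (use a frechet_derivative_works in blast)+
  from fun_cong[OF frechet_derivative_at[OF this], of v] show ?thesis by simp
qed

lemma fd_uminus: "f differentiable at p \<Longrightarrow>
  frechet_derivative (\<lambda>x. - f x) (at p) v = - frechet_derivative f (at p) v"
proof -
  assume a: "f differentiable at p"
  have "((\<lambda>x. - f x) has_derivative (\<lambda>h. - frechet_derivative f (at p) h)) (at p)"
    by (rule has_derivative_minus) (use a frechet_derivative_works in blast)+
  from fun_cong[OF frechet_derivative_at[OF this], of v] show ?thesis by simp
qed

lemma fd_const: "frechet_derivative (\<lambda>x. c) (at p) v = 0"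
proof -
  have "((\<lambda>x. c) has_derivative (\<lambda>h. 0)) (at p)" by simp
  from fun_cong[OF frechet_derivative_at[OF this], of v] show ?thesis by simp
qed

lemma fd_divc: "f differentiable at p \<Longrightarrow>
  frechet_derivative (\<lambda>x. f x / c :: real) (at p) v = frechet_derivative f (at p) v / c"
proof -
  assume a: "f differentiable at p"
  have "((\<lambda>x. f x * (1/c)) has_derivative (\<lambda>h. frechet_derivative f (at p) h * (1/c))) (at p)"
    by (rule has_derivative_mult_left) (use a frechet_derivative_works in blast)+
  from fun_cong[OF frechet_derivative_at[OF this], of v] show ?thesis by simp
qed

lemma pX_add: "f differentiable at p \<Longrightarrow> g differentiable at p \<Longrightarrow> pX (\<lambda>x. f x + g x) p = pX f p + pX g p"
  unfolding pX_def by (rule fd_add)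

lemma pX_diff: "f differentiable at p \<Longrightarrow> g differentiable at p \<Longrightarrow> pX (\<lambda>x. f x - g x) p = pX f p - pX g p"
  unfolding pX_def by (rule fd_diff)

lemma pX_mult: "f differentiable at p \<Longrightarrow> g differentiable at p \<Longrightarrow> pX (\<lambda>x. f x * g x) p = f p * pX g p + pX f p * g p"
  unfolding pX_def by (rule fd_mult)

lemma pX_uminus: "f differentiable at p \<Longrightarrow> pX (\<lambda>x. - f x) p = - pX f p"
  unfolding pX_def by (rule fd_uminus)

lemma pX_const: "pX (\<lambda>x. c) p = 0"
  unfolding pX_def by (rule fd_const)

lemma pX_divc: "f differentiable at p \<Longrightarrow> pX (\<lambda>x. f x / c) p = pX f p / c"
  unfolding pX_def by (rule fd_divc)

lemma pT_add: "f differentiable at p \<Longrightarrow> g differentiable at p \<Longrightarrow> pT (\<lambda>x. f x + g x) p = pT f p + pT g p"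
  unfolding pT_def by (rule fd_add)

lemma pT_diff: "f differentiable at p \<Longrightarrow> g differentiable at p \<Longrightarrow> pT (\<lambda>x. f x - g x) p = pT f p - pT g p"
  unfolding pT_def by (rule fd_diff)

lemma pT_mult: "f differentiable at p \<Longrightarrow> g differentiable at p \<Longrightarrow> pT (\<lambda>x. f x * g x) p = f p * pT g p + pT f p * g p"
  unfolding pT_def by (rule fd_mult)

lemma pT_uminus: "f differentiable at p \<Longrightarrow> pT (\<lambda>x. - f x) p = - pT f p"
  unfolding pT_def by (rule fd_uminus)

lemma pT_const: "pT (\<lambda>x. c) p = 0"
  unfolding pT_def by (rule fd_const)

lemma pT_divc: "f differentiable at p \<Longrightarrow> pT (\<lambda>x. f x / c) p = pT f p / c"
  unfolding pT_def by (rule fd_divc)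

lemmas Drules = pX_add pX_diff pX_mult pX_uminus pX_const pX_divc pT_add pT_diff pT_mult pT_uminus pT_const pT_divc
lemma pw: assumes "(v::real) > 0" shows "v powr (real n / 2) = sqrt v ^ n"
proof -
  have "sqrt v ^ n = (v powr (1/2)) ^ n" using assms by (simp add: powr_half_sqrt)
  also have "\<dots> = (v powr (1/2)) powr (real n)" using assms by (subst powr_realpow) auto
  also have "\<dots> = v powr (real n / 2)" by (simp add: powr_powr)
  finally show ?thesis by simp
qed
lemma c1: "(v::real) > 0 \<Longrightarrow> v powr (3/2) = sqrt v^3"
  using pw[of v 3] by simp
lemma c2: "(v::real) > 0 \<Longrightarrow> v powr (-3) = 1/sqrt v^6"
  using pw[of v 6] by (simp add: powr_minus_divide)
lemma c3: "(v::real) > 0 \<Longrightarrow> v powr (-(1/2)) = 1/sqrt v"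
  using pw[of v 1] by (simp add: powr_minus_divide)
lemma c4: "(v::real) > 0 \<Longrightarrow> v powr (-(5/2)) = 1/sqrt v^5"
  using pw[of v 5] by (simp add: powr_minus_divide)
lemma c5: "(v::real) > 0 \<Longrightarrow> v powr (5/2) = sqrt v^5"
  using pw[of v 5] by simp
lemma c6: "(a::real) powi (-2) = 1/a^2"
  by (simp add: power_int_minus divide_inverse)
lemma struct_eq1:
  fixes \<nu> \<epsilon> \<alpha> \<beta> :: real
  assumes nu: "\<nu> > 0" and eps: "\<epsilon> \<in> {0, 1}" and al: "\<alpha> \<noteq> 0"
    and con: "\<alpha>^2 + \<beta>^2 - 1 = \<epsilon> * ((\<beta> - 1) / \<alpha>)^2"
    and dU: "U differentiable at p" and dU1: "pX U differentiable at p" and dU2: "pX (pX U) differentiable at p"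
    and E: "E_eq \<nu> \<epsilon> U p = 0"
  shows "pX (\<lambda>p. pb_dT \<nu> \<epsilon> \<alpha> \<beta> 1 (jet_of U p)) p - pT (\<lambda>p. pb_dX \<nu> \<epsilon> \<alpha> \<beta> 1 (jet_of U p)) p =
      pb_dX \<nu> \<epsilon> \<alpha> \<beta> 3 (jet_of U p) * pb_dT \<nu> \<epsilon> \<alpha> \<beta> 2 (jet_of U p) - pb_dT \<nu> \<epsilon> \<alpha> \<beta> 3 (jet_of U p) * pb_dX \<nu> \<epsilon> \<alpha> \<beta> 2 (jet_of U p)"
proof -
  have n0: "\<nu> \<noteq> 0" "sqrt \<nu> \<noteq> 0" using nu by auto
  define s where "s = sqrt \<nu>"
  have s0: "s > 0" using nu s_def by simp
  have vs: "\<nu> = s^2" using nu s_def by simp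
  have E': "- 2 * s^4 * pX U p * pX (pX U) p + 3 * \<epsilon> * pX U p * U p
     - s^4 * pX (pX (pX U)) p * U p + 2/3 * pX (pX (pX U)) p
     - 2/3 * s^5 * pX (pX (pX U)) p + \<epsilon> * pT U p
     - s^4 * pT (pX (pX U)) p = 0"
    using E unfolding E_eq_def c5[OF nu] unfolding s_def[symmetric] unfolding vs by (simp add: power_mult_distrib flip: power_mult)
  have E'': "pT (pX (pX U)) p = (- 2 * s^4 * pX U p * pX (pX U) p + 3 * \<epsilon> * pX U p * U p
     - s^4 * pX (pX (pX U)) p * U p + 2/3 * pX (pX (pX U)) p
     - 2/3 * s^5 * pX (pX (pX U)) p + \<epsilon> * pT U p) * inverse s ^ 4"
    using E' s0 by (simp add: field_simps)
  have i3: "inverse (3::real) = 1/3" by simp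
  have ee: "\<epsilon> = 0 \<or> \<epsilon> = 1" using eps by auto
  have con': "\<alpha>^2 + \<beta>^2 - 1 = \<epsilon> * ((\<beta> - 1)^2 * inverse \<alpha> ^ 2)"
    using con by (simp only: divide_inverse power_mult_distrib)
  show ?thesis
    apply (simp add: pb_dT_def pb_dX_def jet_of_def om_dx_def om_dt_def pb_u_def Let_def Drules dU dU1 dU2 n0 al)
    apply (simp only: c1[OF nu] c2[OF nu] c3[OF nu] c4[OF nu] c6 abs_of_pos[OF nu] s_def[symmetric])
    apply (simp only: vs divide_inverse power_inverse[symmetric] inverse_1 mult_1_left mult_1_right)
    apply (simp only: E'' i3)
    using ee s0 al con'
    apply (elim disjE)
     apply (simp only: mult_zero_left mult_zero_right)
     apply (subgoal_tac "s * inverse s = 1" "\<alpha> * inverse \<alpha> = 1", algebra, simp, simp)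
     apply (simp only: mult_1_left mult_1_right)
     apply (subgoal_tac "s * inverse s = 1" "\<alpha> * inverse \<alpha> = 1", algebra, simp, simp)
    done
qed

lemma struct_eq2:
  fixes \<nu> \<epsilon> \<alpha> \<beta> :: real
  assumes nu: "\<nu> > 0" and eps: "\<epsilon> \<in> {0, 1}" and al: "\<alpha> \<noteq> 0"
    and con: "\<alpha>^2 + \<beta>^2 - 1 = \<epsilon> * ((\<beta> - 1) / \<alpha>)^2"
    and dU: "U differentiable at p" and dU1: "pX U differentiable at p" and dU2: "pX (pX U) differentiable at p"
    and E: "E_eq \<nu> \<epsilon> U p = 0"
  shows "pX (\<lambda>p. pb_dT \<nu> \<epsilon> \<alpha> \<beta> 2 (jet_of U p)) p - pT (\<lambda>p. pb_dX \<nu> \<epsilon> \<alpha> \<beta> 2 (jet_of U p)) p =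
      pb_dX \<nu> \<epsilon> \<alpha> \<beta> 1 (jet_of U p) * pb_dT \<nu> \<epsilon> \<alpha> \<beta> 3 (jet_of U p) - pb_dT \<nu> \<epsilon> \<alpha> \<beta> 1 (jet_of U p) * pb_dX \<nu> \<epsilon> \<alpha> \<beta> 3 (jet_of U p)"
proof -
  have n0: "\<nu> \<noteq> 0" "sqrt \<nu> \<noteq> 0" using nu by auto
  define s where "s = sqrt \<nu>"
  have s0: "s > 0" using nu s_def by simp
  have vs: "\<nu> = s^2" using nu s_def by simp
  have E': "- 2 * s^4 * pX U p * pX (pX U) p + 3 * \<epsilon> * pX U p * U p
     - s^4 * pX (pX (pX U)) p * U p + 2/3 * pX (pX (pX U)) p
     - 2/3 * s^5 * pX (pX (pX U)) p + \<epsilon> * pT U p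
     - s^4 * pT (pX (pX U)) p = 0"
    using E unfolding E_eq_def c5[OF nu] unfolding s_def[symmetric] unfolding vs by (simp add: power_mult_distrib flip: power_mult)
  have E'': "pT (pX (pX U)) p = (- 2 * s^4 * pX U p * pX (pX U) p + 3 * \<epsilon> * pX U p * U p
     - s^4 * pX (pX (pX U)) p * U p + 2/3 * pX (pX (pX U)) p
     - 2/3 * s^5 * pX (pX (pX U)) p + \<epsilon> * pT U p) * inverse s ^ 4"
    using E' s0 by (simp add: field_simps)
  have i3: "inverse (3::real) = 1/3" by simp
  have ee: "\<epsilon> = 0 \<or> \<epsilon> = 1" using eps by auto
  have con': "\<alpha>^2 + \<beta>^2 - 1 = \<epsilon> * ((\<beta> - 1)^2 * inverse \<alpha> ^ 2)"
    using con by (simp only: divide_inverse power_mult_distrib)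
  show ?thesis
    apply (simp add: pb_dT_def pb_dX_def jet_of_def om_dx_def om_dt_def pb_u_def Let_def Drules dU dU1 dU2 n0 al)
    apply (simp only: c1[OF nu] c2[OF nu] c3[OF nu] c4[OF nu] c6 abs_of_pos[OF nu] s_def[symmetric])
    apply (simp only: vs divide_inverse power_inverse[symmetric] inverse_1 mult_1_left mult_1_right)
    apply (simp only: E'' i3)
    using ee s0 al con'
    apply (elim disjE)
     apply (simp only: mult_zero_left mult_zero_right)
     apply (subgoal_tac "s * inverse s = 1" "\<alpha> * inverse \<alpha> = 1", algebra, simp, simp)
     apply (simp only: mult_1_left mult_1_right)
     apply (subgoal_tac "s * inverse s = 1" "\<alpha> * inverse \<alpha> = 1", algebra, simp, simp)
    done
qed

lemma struct_eq3:
  fixes \<nu> \<epsilon> \<alpha> \<beta> :: real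
  assumes nu: "\<nu> > 0" and eps: "\<epsilon> \<in> {0, 1}" and al: "\<alpha> \<noteq> 0"
    and con: "\<alpha>^2 + \<beta>^2 - 1 = \<epsilon> * ((\<beta> - 1) / \<alpha>)^2"
    and dU: "U differentiable at p" and dU1: "pX U differentiable at p" and dU2: "pX (pX U) differentiable at p"
    and E: "E_eq \<nu> \<epsilon> U p = 0"
  shows "pX (\<lambda>p. pb_dT \<nu> \<epsilon> \<alpha> \<beta> 3 (jet_of U p)) p - pT (\<lambda>p. pb_dX \<nu> \<epsilon> \<alpha> \<beta> 3 (jet_of U p)) p =
      pb_dX \<nu> \<epsilon> \<alpha> \<beta> 1 (jet_of U p) * pb_dT \<nu> \<epsilon> \<alpha> \<beta> 2 (jet_of U p) - pb_dT \<nu> \<epsilon> \<alpha> \<beta> 1 (jet_of U p) * pb_dX \<nu> \<epsilon> \<alpha> \<beta> 2 (jet_of U p)"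
proof -
  have n0: "\<nu> \<noteq> 0" "sqrt \<nu> \<noteq> 0" using nu by auto
  define s where "s = sqrt \<nu>"
  have s0: "s > 0" using nu s_def by simp
  have vs: "\<nu> = s^2" using nu s_def by simp
  have E': "- 2 * s^4 * pX U p * pX (pX U) p + 3 * \<epsilon> * pX U p * U p
     - s^4 * pX (pX (pX U)) p * U p + 2/3 * pX (pX (pX U)) p
     - 2/3 * s^5 * pX (pX (pX U)) p + \<epsilon> * pT U p
     - s^4 * pT (pX (pX U)) p = 0"
    using E unfolding E_eq_def c5[OF nu] unfolding s_def[symmetric] unfolding vs by (simp add: power_mult_distrib flip: power_mult)
  have E'': "pT (pX (pX U)) p = (- 2 * s^4 * pX U p * pX (pX U) p + 3 * \<epsilon> * pX U p * U p
     - s^4 * pX (pX (pX U)) p * U p + 2/3 * pX (pX (pX U)) p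
     - 2/3 * s^5 * pX (pX (pX U)) p + \<epsilon> * pT U p) * inverse s ^ 4"
    using E' s0 by (simp add: field_simps)
  have i3: "inverse (3::real) = 1/3" by simp
  have ee: "\<epsilon> = 0 \<or> \<epsilon> = 1" using eps by auto
  have con': "\<alpha>^2 + \<beta>^2 - 1 = \<epsilon> * ((\<beta> - 1)^2 * inverse \<alpha> ^ 2)"
    using con by (simp only: divide_inverse power_mult_distrib)
  show ?thesis
    apply (simp add: pb_dT_def pb_dX_def jet_of_def om_dx_def om_dt_def pb_u_def Let_def Drules dU dU1 dU2 n0 al)
    apply (simp only: c1[OF nu] c2[OF nu] c3[OF nu] c4[OF nu] c6 abs_of_pos[OF nu] s_def[symmetric])
    apply (simp only: vs divide_inverse power_inverse[symmetric] inverse_1 mult_1_left mult_1_right)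
    apply (simp only: E'' i3)
    using ee s0 al con'
    apply (elim disjE)
     apply (simp only: mult_zero_left mult_zero_right)
     apply (subgoal_tac "s * inverse s = 1" "\<alpha> * inverse \<alpha> = 1", algebra, simp, simp)
     apply (simp only: mult_1_left mult_1_right)
     apply (subgoal_tac "s * inverse s = 1" "\<alpha> * inverse \<alpha> = 1", algebra, simp, simp)
    done
qed


lemma nonvan:
  fixes \<nu> \<epsilon> \<alpha> \<beta> :: real
  assumes nu: "\<nu> > 0" and al: "\<alpha> \<noteq> 0"
  shows "\<exists>z. pb_dX \<nu> \<epsilon> \<alpha> \<beta> i z \<noteq> 0 \<or> pb_dT \<nu> \<epsilon> \<alpha> \<beta> i z \<noteq> 0"
proof (rule ccontr)
  assume "\<not> ?thesis"
  then have h: "\<And>z. pb_dX \<nu> \<epsilon> \<alpha> \<beta> i z = 0" by blast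
  have pos: "\<nu> powr (3/2) * \<nu> powr (-1) \<noteq> 0" using nu by simp
  show False
  proof (cases "i = 2")
    case True
    then have "pb_dX \<nu> \<epsilon> \<alpha> \<beta> i (0,0,0,0,0) = \<alpha> * \<nu> powr (-1)"
      by (simp add: pb_dX_def om_dx_def)
    then show False using h al nu by simp
  next
    case False
    then have "pb_dX \<nu> \<epsilon> \<alpha> \<beta> i (0,0,0,0,1) - pb_dX \<nu> \<epsilon> \<alpha> \<beta> i (0,0,0,0,0) = \<nu> powr (3/2) * \<nu> powr (-1)"
      using nu by (simp add: pb_dX_def om_dx_def Let_def) (simp add: field_simps)
    then show False using h pos by simp
  qed
qed

theorem corollary1:
  fixes \<nu> \<epsilon> \<alpha> \<beta> :: real
  assumes "\<nu> > 0" and "\<epsilon> \<in> {0, 1}" and "\<alpha> \<noteq> 0"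
    and "\<alpha>^2 + \<beta>^2 - 1 = \<epsilon> * ((\<beta> - 1) / \<alpha>)^2"
  shows "describes_pss_with (E_eq \<nu> \<epsilon>) (pb_dX \<nu> \<epsilon> \<alpha> \<beta>) (pb_dT \<nu> \<epsilon> \<alpha> \<beta>)"
  unfolding describes_pss_with_def
proof (intro conjI ballI allI impI)
  fix i :: nat
  show "smooth_on UNIV (pb_dX \<nu> \<epsilon> \<alpha> \<beta> i)" by (rule poly_smooth[OF poly_pbX])
  show "smooth_on UNIV (pb_dT \<nu> \<epsilon> \<alpha> \<beta> i)" by (rule poly_smooth[OF poly_pbT])
  show "\<exists>z. pb_dX \<nu> \<epsilon> \<alpha> \<beta> i z \<noteq> 0 \<or> pb_dT \<nu> \<epsilon> \<alpha> \<beta> i z \<noteq> 0"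
    by (rule nonvan[OF assms(1) assms(3)])
next
  fix S U
  assume S: "open S" and sm: "smooth_on S U" and E: "\<forall>p\<in>S. E_eq \<nu> \<epsilon> U p = 0"
  show "let A = \<lambda>i p. pb_dX \<nu> \<epsilon> \<alpha> \<beta> i (jet_of U p); B = \<lambda>i p. pb_dT \<nu> \<epsilon> \<alpha> \<beta> i (jet_of U p) in
        \<forall>p\<in>S.
           pX (B 1) p - pT (A 1) p = A 3 p * B 2 p - B 3 p * A 2 p \<and>
           pX (B 2) p - pT (A 2) p = A 1 p * B 3 p - B 1 p * A 3 p \<and>
           pX (B 3) p - pT (A 3) p = A 1 p * B 2 p - B 1 p * A 2 p"
    unfolding Let_def
  proof (intro ballI conjI)
    fix p assume p: "p \<in> S"
    have sm1: "smooth_on S (pX U)" by (rule sm_pX[OF sm])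
    have sm2: "smooth_on S (pX (pX U))" by (rule sm_pX[OF sm1])
    have dU: "U differentiable at p" by (rule sm_diff[OF sm p])
    have dU1: "pX U differentiable at p" by (rule sm_diff[OF sm1 p])
    have dU2: "pX (pX U) differentiable at p" by (rule sm_diff[OF sm2 p])
    have Ep: "E_eq \<nu> \<epsilon> U p = 0" using E p by blast
    note prem = assms dU dU1 dU2 Ep
    show "pX (\<lambda>p. pb_dT \<nu> \<epsilon> \<alpha> \<beta> 1 (jet_of U p)) p - pT (\<lambda>p. pb_dX \<nu> \<epsilon> \<alpha> \<beta> 1 (jet_of U p)) p =
      pb_dX \<nu> \<epsilon> \<alpha> \<beta> 3 (jet_of U p) * pb_dT \<nu> \<epsilon> \<alpha> \<beta> 2 (jet_of U p) - pb_dT \<nu> \<epsilon> \<alpha> \<beta> 3 (jet_of U p) * pb_dX \<nu> \<epsilon> \<alpha> \<beta> 2 (jet_of U p)"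
      by (rule struct_eq1[OF prem])
    show "pX (\<lambda>p. pb_dT \<nu> \<epsilon> \<alpha> \<beta> 2 (jet_of U p)) p - pT (\<lambda>p. pb_dX \<nu> \<epsilon> \<alpha> \<beta> 2 (jet_of U p)) p =
      pb_dX \<nu> \<epsilon> \<alpha> \<beta> 1 (jet_of U p) * pb_dT \<nu> \<epsilon> \<alpha> \<beta> 3 (jet_of U p) - pb_dT \<nu> \<epsilon> \<alpha> \<beta> 1 (jet_of U p) * pb_dX \<nu> \<epsilon> \<alpha> \<beta> 3 (jet_of U p)"
      by (rule struct_eq2[OF prem])
    show "pX (\<lambda>p. pb_dT \<nu> \<epsilon> \<alpha> \<beta> 3 (jet_of U p)) p - pT (\<lambda>p. pb_dX \<nu> \<epsilon> \<alpha> \<beta> 3 (jet_of U p)) p =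
      pb_dX \<nu> \<epsilon> \<alpha> \<beta> 1 (jet_of U p) * pb_dT \<nu> \<epsilon> \<alpha> \<beta> 2 (jet_of U p) - pb_dT \<nu> \<epsilon> \<alpha> \<beta> 1 (jet_of U p) * pb_dX \<nu> \<epsilon> \<alpha> \<beta> 2 (jet_of U p)"
      by (rule struct_eq3[OF prem])
  qed
qed

end
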